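(* Let $m\ge2$ and $2^m\le n<2^m+2^{m-1}-1$. Then every $f\in\mathbf{SB}_n$ satisfies $\mathcal{FAI}(f)\le\max\{2^m-2,\ 2n-3\cdot2^{m-1}+2\}$.
   Context: $\mathbf{SB}_n$ is the set of symmetric Boolean functions on $n$ variables; $\deg$ is the algebraic degree. $\mathcal{AI}(f)=\min\{\deg(g): g\neq0,\ gf=0 \text{ or } g(f+1)=0\}$ is the algebraic immunity, and the fast algebraic immunity is $\mathcal{FAI}(f)=\min\big(\{2\mathcal{AI}(f)\}\cup\{\deg(g)+\deg(gf): g\in\mathbf{B}_n,\ 1\le\deg(g)<\mathcal{AI}(f)\}\big)$, where $\mathbf{B}_n$ is the set of all Boolean functions on $n$ variables. *)

theory Defs
  imports Main
begin

text \<open>A Boolean function on n variables is represented by its truth table indexed by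
  the support sets T of input vectors x (T = {i. x_i = 1} \<subseteq> {0..<n}).
  Values outside subsets of {0..<n} are fixed to False so that B_n is a genuine set
  of 2^(2^n) functions.\<close>

type_synonym boolfun = "nat set \<Rightarrow> bool"

definition BF :: "nat \<Rightarrow> boolfun set" where
  "BF n = {f. \<forall>T. \<not> T \<subseteq> {..<n} \<longrightarrow> f T = False}"

definition SB :: "nat \<Rightarrow> boolfun set" where
  "SB n = {f \<in> BF n. \<forall>S T. S \<subseteq> {..<n} \<longrightarrow> T \<subseteq> {..<n} \<longrightarrow> card S = card T \<longrightarrow> f S = f T}"

definition bmul :: "boolfun \<Rightarrow> boolfun \<Rightarrow> boolfun" where
  "bmul g f = (\<lambda>T. g T \<and> f T)"

definition bcompl :: "nat \<Rightarrow> boolfun \<Rightarrow> boolfun" where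
  "bcompl n f = (\<lambda>T. T \<subseteq> {..<n} \<and> \<not> f T)"

text \<open>ANF coefficient of the monomial x_S (Moebius transform over GF(2)).\<close>
definition anf_coeff :: "boolfun \<Rightarrow> nat set \<Rightarrow> bool" where
  "anf_coeff f S = odd (card {T. T \<subseteq> S \<and> f T})"

text \<open>Algebraic degree (degree of the zero function taken as 0).\<close>
definition deg :: "nat \<Rightarrow> boolfun \<Rightarrow> nat" where
  "deg n f = Max ({card S | S. S \<subseteq> {..<n} \<and> anf_coeff f S} \<union> {0})"

definition zero_fun :: boolfun where
  "zero_fun = (\<lambda>T. False)"

definition AI :: "nat \<Rightarrow> boolfun \<Rightarrow> nat" where
  "AI n f = (LEAST d. \<exists>g \<in> BF n. g \<noteq> zero_fun \<and>
       (bmul g f = zero_fun \<or> bmul g (bcompl n f) = zero_fun) \<and> deg n g = d)"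

definition FAI :: "nat \<Rightarrow> boolfun \<Rightarrow> nat" where
  "FAI n f = (LEAST k. k \<in> {2 * AI n f} \<union>
       {deg n g + deg n (bmul g f) | g. g \<in> BF n \<and> 1 \<le> deg n g \<and> deg n g < AI n f})"

end

theory Submission
  imports Defs
begin


lemma sum_mod2_cong:
  fixes f g :: "'a \<Rightarrow> nat"
  assumes "\<And>i. i \<in> A \<Longrightarrow> f i mod 2 = g i mod 2"
  shows "sum f A mod 2 = sum g A mod 2"
proof -
  have "sum f A mod 2 = (\<Sum>i\<in>A. f i mod 2) mod 2" by (simp add: mod_sum_eq)
  also have "\<dots> = (\<Sum>i\<in>A. g i mod 2) mod 2" using assms by (simp cong: sum.cong)
  also have "\<dots> = sum g A mod 2" by (simp add: mod_sum_eq)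
  finally show ?thesis .
qed

lemma mod2_drop: "((x::nat) + 2*y + z) mod 2 = (x + z) mod 2" by presburger

lemma choose_SS: "Suc (Suc n) choose Suc (Suc k) = (n choose Suc (Suc k)) + 2 * (n choose Suc k) + (n choose k)"
  by simp

lemma choose_double: "((2*c) choose (2*b)) mod 2 = (c choose b) mod 2 \<and> even ((2*c) choose (2*b+1))"
proof (induction c arbitrary: b)
  case 0
  then show ?case by (cases b) auto
next
  case (Suc c)
  have e: "2 * Suc c = Suc (Suc (2*c))" by simp
  show ?case
  proof (cases b)
    case 0
    then show ?thesis by (simp add: e)
  next
    case (Suc b')
    have h1: "2*b = Suc (Suc (2*b'))" "2*b+1 = Suc (Suc (2*b'+1))" using Suc by auto
    have a: "(2 * Suc c choose 2*b) = (2*c choose (2*(b'+1))) + 2 * (2*c choose (2*b'+1)) + (2*c choose (2*b'))"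
      unfolding e h1 choose_SS by (simp add: Suc)
    have b: "(2 * Suc c choose (2*b+1)) = (2*c choose (2*(b'+1)+1)) + 2 * (2*c choose (2*(b'+1))) + (2*c choose (2*b'+1))"
      unfolding e h1 choose_SS by (simp add: Suc)
    have ih1: "((2*c) choose (2*(b'+1))) mod 2 = (c choose (b'+1)) mod 2" using Suc.IH by blast
    have ih2: "((2*c) choose (2*b')) mod 2 = (c choose b') mod 2" using Suc.IH by blast
    have ih3: "even ((2*c) choose (2*(b'+1)+1))" "even ((2*c) choose (2*b'+1))" using Suc.IH by blast+
    have "(2 * Suc c choose 2*b) mod 2 = ((2*c choose (2*(b'+1))) + (2*c choose (2*b'))) mod 2"
      unfolding a by (rule mod2_drop)
    also have "\<dots> = ((c choose (b'+1)) + (c choose b')) mod 2"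
      by (rule mod_add_cong[OF ih1 ih2])
    also have "\<dots> = (Suc c choose b) mod 2" using Suc by (simp add: add.commute)
    finally show ?thesis using b ih3 by simp
  qed
qed

lemma choose_pow2_even:
  assumes "0 < i" "i < 2^e"
  shows "even ((2^e::nat) choose i)"
  using assms
proof (induction e arbitrary: i)
  case 0
  then show ?case by simp
next
  case (Suc e)
  have p: "(2::nat)^Suc e = 2*2^e" by simp
  show ?case
  proof (cases "even i")
    case True
    then obtain d where d: "i = 2*d" by blast
    have "0 < d" "d < 2^e" using Suc.prems d by auto
    then have ev: "even ((2^e::nat) choose d)" using Suc.IH by blast
    have "((2*2^e) choose (2*d)) mod 2 = ((2^e::nat) choose d) mod 2" using choose_double by blast
    then have "even ((2*2^e) choose (2*d))" using ev by (simp only: even_iff_mod_2_eq_zero)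
    then show ?thesis unfolding p d .
  next
    case False
    then obtain d where d: "i = 2*d+1" using oddE by blast
    have "even ((2*2^e) choose (2*d+1))" using choose_double by blast
    then show ?thesis unfolding p d .
  qed
qed

lemma choose_shift:
  "((a + 2^e) choose b) mod 2 = ((a choose b) + (if 2^e \<le> b then a choose (b - 2^e) else 0)) mod 2"
proof -
  have "((a + 2^e) choose b) = (\<Sum>k\<le>b. ((2^e::nat) choose k) * (a choose (b - k)))"
    using vandermonde[of "2^e" a b] by (simp add: add.commute)
  also have "\<dots> mod 2 = (\<Sum>k\<le>b. (if k = 0 then a choose b else 0) + (if k = 2^e then a choose (b - k) else 0)) mod 2"
  proof (rule sum_mod2_cong)
    fix k assume "k \<in> {..b}"
    show "((2^e::nat) choose k) * (a choose (b - k)) mod 2 = ((if k = 0 then a choose b else 0) + (if k = 2^e then a choose (b - k) else 0)) mod 2"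
    proof (cases "k = 0 \<or> k = 2^e")
      case True
      then show ?thesis by auto
    next
      case False
      then have "0 < k" by auto
      show ?thesis
      proof (cases "k < 2^e")
        case True
        then have "even ((2^e::nat) choose k)" using choose_pow2_even \<open>0<k\<close> by blast
        then show ?thesis using False by auto
      next
        case False2: False
        have z: "(2^e::nat) choose k = 0" using False False2 by simp
        show ?thesis using False by (simp add: z)
      qed
    qed
  qed
  also have "(\<Sum>k\<le>b. (if k = 0 then a choose b else 0) + (if k = 2^e then a choose (b - k) else 0))
      = (a choose b) + (if 2^e \<le> b then a choose (b - 2^e) else 0)"
    by (simp add: sum.distrib sum.delta)
  finally show ?thesis .
qed

lemma mod2_eq_iff: "((x::nat) mod 2 = y mod 2) \<longleftrightarrow> (even x \<longleftrightarrow> even y)" by presburger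

definition W :: "(nat \<Rightarrow> bool) \<Rightarrow> nat \<Rightarrow> nat" where
  "W p s = (\<Sum>k\<le>s. if p k then s choose k else 0)"

lemma W_cong: "(\<And>k. k \<le> s \<Longrightarrow> p k = q k) \<Longrightarrow> W p s = W q s"
  unfolding W_def by (rule sum.cong) auto

lemma W_zero: "(\<And>k. k \<le> s \<Longrightarrow> \<not> p k) \<Longrightarrow> W p s = 0"
  unfolding W_def by (rule sum.neutral) auto

lemma W_top: assumes "\<And>k. k < s \<Longrightarrow> \<not> p k" "p s" shows "W p s = 1"
proof -
  have "W p s = (\<Sum>k<Suc s. if p k then s choose k else 0)"
    unfolding W_def lessThan_Suc_atMost ..
  also have "\<dots> = (\<Sum>k<s. if p k then s choose k else 0) + 1"
    using assms(2) by simp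
  also have "(\<Sum>k<s. if p k then s choose k else 0) = 0"
    using assms(1) by (intro sum.neutral) auto
  finally show ?thesis by simp
qed

lemma W_xor: "(W p s + W q s) mod 2 = W (\<lambda>k. p k \<noteq> q k) s mod 2"
proof -
  have "W p s + W q s = (\<Sum>k\<le>s. (if p k then s choose k else 0) + (if q k then s choose k else 0))"
    unfolding W_def by (simp add: sum.distrib)
  also have "\<dots> mod 2 = W (\<lambda>k. p k \<noteq> q k) s mod 2"
    unfolding W_def by (rule sum_mod2_cong) auto
  finally show ?thesis .
qed

lemma W_shift:
  assumes "s < 2^e"
  shows "W p (2^e + s) mod 2 = (W p s + W (\<lambda>k. p (k + 2^e)) s) mod 2"
proof -
  let ?K = "(2::nat)^e"
  have "W p (?K + s) mod 2 = (\<Sum>k\<le>?K + s. (if p k then s choose k else 0) + (if p k \<and> ?K \<le> k then s choose (k - ?K) else 0)) mod 2"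
    unfolding W_def
  proof (rule sum_mod2_cong)
    fix k
    have "(?K + s choose k) mod 2 = ((s choose k) + (if ?K \<le> k then s choose (k - ?K) else 0)) mod 2"
      using choose_shift[of s e k] by (simp add: add.commute)
    then show "(if p k then ?K + s choose k else 0) mod 2 = ((if p k then s choose k else 0) + (if p k \<and> ?K \<le> k then s choose (k - ?K) else 0)) mod 2"
      by auto
  qed
  also have "(\<Sum>k\<le>?K + s. (if p k then s choose k else 0) + (if p k \<and> ?K \<le> k then s choose (k - ?K) else 0))
     = (\<Sum>k\<le>?K + s. (if p k then s choose k else 0)) + (\<Sum>k\<le>?K + s. (if p k \<and> ?K \<le> k then s choose (k - ?K) else 0))"
    by (simp add: sum.distrib)
  also have "(\<Sum>k\<le>?K + s. (if p k then s choose k else 0)) = W p s"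
    unfolding W_def by (rule sum.mono_neutral_right) auto
  also have "(\<Sum>k\<le>?K + s. (if p k \<and> ?K \<le> k then s choose (k - ?K) else 0))
      = (\<Sum>k\<in>{?K..s + ?K}. (if p k then s choose (k - ?K) else 0))"
    by (rule sum.mono_neutral_cong_right) auto
  also have "\<dots> = (\<Sum>k\<in>{0 + ?K..s + ?K}. (if p k then s choose (k - ?K) else 0))" by simp
  also have "\<dots> = (\<Sum>i\<in>{0..s}. (if p (i + ?K) then s choose i else 0))"
  proof -
    have "\<And>i. i + ?K - ?K = i" by simp
    then show ?thesis by (subst sum.shift_bounds_cl_nat_ivl) (simp only:)
  qed
  also have "\<dots> = W (\<lambda>k. p (k + 2^e)) s"
    unfolding W_def atLeast0AtMost ..
  finally show ?thesis .
qed

lemma W_shift_even: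
  assumes "s < 2^e"
  shows "even (W p (2^e + s)) \<longleftrightarrow> even (W (\<lambda>k. p k \<noteq> p (k + 2^e)) s)"
  using W_shift[OF assms, of p] W_xor[of p s "\<lambda>k. p (k + 2^e)"] mod2_eq_iff by metis

lemma W_count:
  assumes "finite S"
  shows "card {T. T \<subseteq> S \<and> p (card T)} = W p (card S)"
proof -
  have eq: "{T. T \<subseteq> S \<and> p (card T)} = (\<Union>k\<in>{k\<in>{..card S}. p k}. {T. T \<subseteq> S \<and> card T = k})"
    using assms by (auto intro: card_mono)
  have "card {T. T \<subseteq> S \<and> p (card T)} = (\<Sum>k\<in>{k\<in>{..card S}. p k}. card {T. T \<subseteq> S \<and> card T = k})"
    unfolding eq using assms by (intro card_UN_disjoint) auto
  also have "\<dots> = (\<Sum>k\<in>{k\<in>{..card S}. p k}. card S choose k)"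
    using n_subsets[OF assms] by simp
  also have "\<dots> = W p (card S)"
    unfolding W_def by (rule sum.inter_filter) simp
  finally show ?thesis .
qed

lemma sum_choose_choose:
  assumes "t \<le> s"
  shows "(\<Sum>k\<le>s. (s choose k) * (k choose t)) = (s choose t) * 2 ^ (s - t)"
proof -
  have "(\<Sum>k\<le>s. (s choose k) * (k choose t)) = (\<Sum>k\<in>{t..s}. (s choose k) * (k choose t))"
    by (rule sum.mono_neutral_right) auto
  also have "\<dots> = (\<Sum>k\<in>{t..s}. (s choose t) * ((s - t) choose (k - t)))"
    by (rule sum.cong) (auto simp: choose_mult)
  also have "\<dots> = (s choose t) * (\<Sum>k\<in>{t..s}. ((s - t) choose (k - t)))"
    by (simp add: sum_distrib_left)
  also have "(\<Sum>k\<in>{t..s}. ((s - t) choose (k - t))) = (\<Sum>k\<in>{0 + t..(s - t) + t}. ((s - t) choose (k - t)))"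
    using assms by simp
  also have "\<dots> = (\<Sum>i\<in>{0..s - t}. ((s - t) choose i))"
    by (subst sum.shift_bounds_cl_nat_ivl) simp
  also have "\<dots> = 2 ^ (s - t)"
    unfolding atLeast0AtMost by (rule choose_row_sum)
  finally show ?thesis .
qed

lemma mult_mod2_if: "((a::nat) * b) mod 2 = (if odd b then a else 0) mod 2"
  by (auto simp: mod2_eq_iff)

lemma W_sigma:
  assumes "t < s"
  shows "even (W (\<lambda>k. odd (k choose t)) s)"
proof -
  have "W (\<lambda>k. odd (k choose t)) s mod 2 = (\<Sum>k\<le>s. (s choose k) * (k choose t)) mod 2"
    unfolding W_def by (rule sum_mod2_cong) (simp add: mult_mod2_if)
  also have "\<dots> = ((s choose t) * 2 ^ (s - t)) mod 2"
    using assms by (simp add: sum_choose_choose)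
  also have "\<dots> = 0" using assms by simp
  finally show ?thesis by presburger
qed



lemma deg_le:
  assumes "\<And>S. S \<subseteq> {..<n} \<Longrightarrow> D < card S \<Longrightarrow> even (card {T. T \<subseteq> S \<and> h T})"
  shows "deg n h \<le> D"
proof -
  let ?X = "{card S |S. S \<subseteq> {..<n} \<and> anf_coeff h S}"
  have fin: "finite ?X"
  proof (rule finite_subset[of _ "{..n}"])
    show "?X \<subseteq> {..n}"
    proof
      fix x assume "x \<in> ?X"
      then obtain S where "x = card S" "S \<subseteq> {..<n}" by blast
      then show "x \<in> {..n}" using card_mono[of "{..<n}" S] by auto
    qed
  qed simp
  have "\<forall>x\<in>?X \<union> {0}. x \<le> D"
  proof
    fix x assume "x \<in> ?X \<union> {0}"
    then show "x \<le> D"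
    proof
      assume "x \<in> ?X"
      then obtain S where S: "x = card S" "S \<subseteq> {..<n}" "anf_coeff h S" by blast
      show "x \<le> D"
      proof (rule ccontr)
        assume "\<not> x \<le> D"
        then have "even (card {T. T \<subseteq> S \<and> h T})" using assms S by auto
        then show False using S(3) unfolding anf_coeff_def by simp
      qed
    qed simp
  qed
  then show ?thesis unfolding deg_def using fin by (subst Max_le_iff) auto
qed

lemma deg_ge:
  assumes "S \<subseteq> {..<n}" "odd (card {T. T \<subseteq> S \<and> h T})"
  shows "card S \<le> deg n h"
proof -
  let ?X = "{card S |S. S \<subseteq> {..<n} \<and> anf_coeff h S}"
  have fin: "finite ?X"
  proof (rule finite_subset[of _ "{..n}"])
    show "?X \<subseteq> {..n}"
    proof
      fix x assume "x \<in> ?X"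
      then obtain S where "x = card S" "S \<subseteq> {..<n}" by blast
      then show "x \<in> {..n}" using card_mono[of "{..<n}" S] by auto
    qed
  qed simp
  have "card S \<in> ?X \<union> {0}" using assms unfolding anf_coeff_def by blast
  then show ?thesis unfolding deg_def using fin by (intro Max_ge) auto
qed

lemma FAI_le:
  assumes "g \<in> BF n" "1 \<le> deg n g" "deg n g \<le> a" "deg n (bmul g f) \<le> b" "a + b \<le> B" "2*a \<le> B"
  shows "FAI n f \<le> B"
proof (cases "deg n g < AI n f")
  case True
  have "FAI n f \<le> deg n g + deg n (bmul g f)"
  proof -
    have "deg n g + deg n (bmul g f) \<in> {deg n g + deg n (bmul g f) |g. g \<in> BF n \<and> 1 \<le> deg n g \<and> deg n g < AI n f}"
      by (intro CollectI exI[of _ g] conjI) (use assms True in simp_all)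
    then show ?thesis unfolding FAI_def by (intro Least_le UnI2)
  qed
  then show ?thesis using assms by linarith
next
  case False
  have "FAI n f \<le> 2 * AI n f"
    unfolding FAI_def by (intro Least_le UnI1) simp
  then show ?thesis using assms False by linarith
qed

lemma SB_val:
  assumes "f \<in> SB n" "T \<subseteq> {..<n}"
  shows "f T = f {..<card T}"
proof -
  have "card T \<le> n" using card_mono[of "{..<n}" T] assms by auto
  then have sub: "{..<card T} \<subseteq> {..<n}" by auto
  from assms(1) have h: "\<forall>S T. S \<subseteq> {..<n} \<longrightarrow> T \<subseteq> {..<n} \<longrightarrow> card S = card T \<longrightarrow> f S = f T"
    unfolding SB_def by blast
  show ?thesis using h assms(2) sub card_lessThan by metis
qed

lemma count_g:
  fixes n :: nat and S :: "nat set"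
  assumes "S \<subseteq> {..<n}"
  shows "card {T. T \<subseteq> S \<and> T \<subseteq> {..<n} \<and> p (card T)} = W p (card S)"
proof -
  have eq: "{T. T \<subseteq> S \<and> T \<subseteq> {..<n} \<and> p (card T)} = {T. T \<subseteq> S \<and> p (card T)}"
  proof (intro Collect_cong iffI)
    fix T assume "T \<subseteq> S \<and> T \<subseteq> {..<n} \<and> p (card T)"
    then show "T \<subseteq> S \<and> p (card T)" by simp
  next
    fix T assume a: "T \<subseteq> S \<and> p (card T)"
    then have "T \<subseteq> {..<n}" using assms by (meson subset_trans)
    then show "T \<subseteq> S \<and> T \<subseteq> {..<n} \<and> p (card T)" using a by simp
  qed
  have fin: "finite S" by (rule finite_subset[OF assms]) simp
  show ?thesis unfolding eq by (rule W_count[OF fin])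
qed

lemma count_gf:
  assumes "f \<in> SB n" "S \<subseteq> {..<n}"
  shows "card {T. T \<subseteq> S \<and> bmul (\<lambda>T. T \<subseteq> {..<n} \<and> p (card T)) f T} = W (\<lambda>k. p k \<and> f {..<k}) (card S)"
proof -
  have "{T. T \<subseteq> S \<and> bmul (\<lambda>T. T \<subseteq> {..<n} \<and> p (card T)) f T} = {T. T \<subseteq> S \<and> (p (card T) \<and> f {..<card T})}"
  proof (intro Collect_cong iffI)
    fix T
    assume "T \<subseteq> S \<and> bmul (\<lambda>T. T \<subseteq> {..<n} \<and> p (card T)) f T"
    then show "T \<subseteq> S \<and> p (card T) \<and> f {..<card T}"
      using SB_val[OF assms(1), of T] assms(2) unfolding bmul_def by auto
  next
    fix T
    assume a: "T \<subseteq> S \<and> p (card T) \<and> f {..<card T}"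
    then have "T \<subseteq> {..<n}" using assms(2) by auto
    then show "T \<subseteq> S \<and> bmul (\<lambda>T. T \<subseteq> {..<n} \<and> p (card T)) f T"
      using SB_val[OF assms(1), of T] a unfolding bmul_def by auto
  qed
  moreover have "finite S" using assms finite_subset by blast
  ultimately show ?thesis using W_count[of S "\<lambda>k. p k \<and> f {..<k}"] by simp
qed



theorem corollary7:
  fixes m n :: nat and f :: boolfun
  assumes "m \<ge> 2"
    and "2 ^ m \<le> n"
    and "n < 2 ^ m + 2 ^ (m - 1) - 1"
    and "f \<in> SB n"
  shows "FAI n f \<le> max (2 ^ m - 2) (2 * n - 3 * 2 ^ (m - 1) + 2)"
proof -
  define M where "M = (2::nat)^(m-1)"
  have msuc: "m = Suc (m - 1)" using assms(1) by simp
  have M2: "(2::nat)^m = 2*M" unfolding M_def by (subst msuc) simp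
  have "(2::nat)^1 \<le> 2^(m-1)" using assms(1) by (intro power_increasing) auto
  then have Mge: "2 \<le> M" unfolding M_def by simp
  define r where "r = n - 2*M"
  have n_eq: "n = 2*M + r" using assms(2) M2 unfolding r_def by simp
  have r_lt: "r + 2 \<le> M" using assms(3) M2 n_eq unfolding M_def by simp
  define B where "B = max (2 ^ m - 2) (2 * n - 3 * 2 ^ (m - 1) + 2)"
  have B1: "2*M - 2 \<le> B" unfolding B_def M2 by simp
  have B2: "M + 2*r + 2 \<le> B" unfolding B_def M_def[symmetric] using n_eq by simp
  have shM: "\<And>s' P. s' < M \<Longrightarrow> even (W P (M + s')) \<longleftrightarrow> even (W (\<lambda>k. P k \<noteq> P (k + M)) s')"
    unfolding M_def by (rule W_shift_even)
  have sh2M: "\<And>s' P. s' < 2*M \<Longrightarrow> even (W P (2*M + s')) \<longleftrightarrow> even (W (\<lambda>k. P k \<noteq> P (k + 2*M)) s')"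
    unfolding M2[symmetric] by (rule W_shift_even)
  have cardS: "\<And>S. S \<subseteq> {..<n} \<Longrightarrow> card S \<le> n"
    using card_mono[of "{..<n}"] by fastforce
  have "FAI n f \<le> B"
  proof (cases "\<exists>j. r < j \<and> j < M \<and> f {..<j} = f {..<j+M}")
    case True
    then obtain j where j: "r < j" "j < M" "f {..<j} = f {..<j+M}" by blast
    define p where "p k = (k = j \<or> k = j + M)" for k
    define g where "g = (\<lambda>T. T \<subseteq> {..<n} \<and> p (card T))"
    have gBF: "g \<in> BF n" unfolding g_def BF_def by auto
    have cg: "\<And>S. S \<subseteq> {..<n} \<Longrightarrow> card {T. T \<subseteq> S \<and> g T} = W p (card S)"
      unfolding g_def using count_g by simp
    have cgf: "\<And>S. S \<subseteq> {..<n} \<Longrightarrow> card {T. T \<subseteq> S \<and> bmul g f T} = W (\<lambda>k. p k \<and> f {..<k}) (card S)"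
      unfolding g_def by (rule count_gf[OF assms(4)])
    have key: "\<And>s. M \<le> s \<Longrightarrow> s \<le> n \<Longrightarrow> even (W p s)"
    proof -
      fix s assume s: "M \<le> s" "s \<le> n"
      show "even (W p s)"
      proof (cases "s < 2*M")
        case True
        define s' where "s' = s - M"
        have ss: "s = M + s'" "s' < M" using s True unfolding s'_def by auto
        have "W (\<lambda>k. p k \<noteq> p (k + M)) s' = 0"
          by (rule W_zero) (use ss j in \<open>auto simp: p_def\<close>)
        then show ?thesis using shM[OF ss(2), of p] ss(1) by simp
      next
        case False
        define s' where "s' = s - 2*M"
        have ss: "s = 2*M + s'" "s' \<le> r" "s' < 2*M" using s False n_eq r_lt unfolding s'_def by auto
        have "W (\<lambda>k. p k \<noteq> p (k + 2*M)) s' = 0"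
          by (rule W_zero) (use ss j in \<open>auto simp: p_def\<close>)
        then show ?thesis using sh2M[OF ss(3), of p] ss(1) by simp
      qed
    qed
    have jn: "{..<j} \<subseteq> {..<n}" using j n_eq by auto
    have "W p j = 1" by (rule W_top) (auto simp: p_def)
    then have "card {..<j} \<le> deg n g" using cg[OF jn] by (intro deg_ge[OF jn]) simp
    then have dg1: "1 \<le> deg n g" using j by simp
    have dg2: "deg n g \<le> M - 1"
    proof (rule deg_le)
      fix S assume S: "S \<subseteq> {..<n}" "M - 1 < card S"
      then show "even (card {T. T \<subseteq> S \<and> g T})" using cg[OF S(1)] key cardS[OF S(1)] by simp
    qed
    have dg3: "deg n (bmul g f) \<le> M - 1"
    proof (rule deg_le)
      fix S assume S: "S \<subseteq> {..<n}" "M - 1 < card S"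
      show "even (card {T. T \<subseteq> S \<and> bmul g f T})"
      proof (cases "f {..<j}")
        case True
        have "W (\<lambda>k. p k \<and> f {..<k}) (card S) = W p (card S)"
          by (rule W_cong) (use True j in \<open>auto simp: p_def\<close>)
        then show ?thesis using cgf[OF S(1)] key cardS[OF S(1)] S(2) by simp
      next
        case False
        have "W (\<lambda>k. p k \<and> f {..<k}) (card S) = 0"
          by (rule W_zero) (use False j in \<open>auto simp: p_def\<close>)
        then show ?thesis using cgf[OF S(1)] by simp
      qed
    qed
    show ?thesis by (rule FAI_le[OF gBF dg1 dg2 dg3]) (use B1 Mge in auto)
  next
    case False
    then have nA: "\<And>j. r < j \<Longrightarrow> j < M \<Longrightarrow> f {..<j} \<noteq> f {..<j+M}" by blast
    define p where "p k = odd (k choose (r+1))" for k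
    define g where "g = (\<lambda>T. T \<subseteq> {..<n} \<and> p (card T))"
    have gBF: "g \<in> BF n" unfolding g_def BF_def by auto
    have cg: "\<And>S. S \<subseteq> {..<n} \<Longrightarrow> card {T. T \<subseteq> S \<and> g T} = W p (card S)"
      unfolding g_def using count_g by simp
    have cgf: "\<And>S. S \<subseteq> {..<n} \<Longrightarrow> card {T. T \<subseteq> S \<and> bmul g f T} = W (\<lambda>k. p k \<and> f {..<k}) (card S)"
      unfolding g_def by (rule count_gf[OF assms(4)])
    have psh: "\<And>k e. r + 1 < 2^e \<Longrightarrow> p (k + 2^e) = p k"
    proof -
      fix k e assume "r + 1 < (2::nat)^e"
      then have "((k + 2^e) choose (r+1)) mod 2 = (k choose (r+1)) mod 2"
        using choose_shift[of k e "r+1"] by simp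
      then show "p (k + 2^e) = p k" unfolding p_def by (simp add: mod2_eq_iff)
    qed
    have pM: "\<And>k. p (k + M) = p k" using psh[where e="m-1"] r_lt unfolding M_def by simp
    have p2M: "\<And>k. p (k + 2*M) = p k" using psh[where e=m] r_lt M2 by simp
    have psmall: "\<And>k. k \<le> r \<Longrightarrow> \<not> p k" unfolding p_def by (simp add: binomial_eq_0)
    have rn: "{..<r+1} \<subseteq> {..<n}" using n_eq r_lt by auto
    have "W p (r+1) = 1" by (rule W_top) (auto simp: p_def binomial_eq_0)
    then have "card {..<r+1} \<le> deg n g" using cg[OF rn] by (intro deg_ge[OF rn]) simp
    then have dg1: "1 \<le> deg n g" by simp
    have dg2: "deg n g \<le> r + 1"
    proof (rule deg_le)
      fix S assume S: "S \<subseteq> {..<n}" "r + 1 < card S"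
      then show "even (card {T. T \<subseteq> S \<and> g T})" using cg[OF S(1)] W_sigma[OF S(2)] unfolding p_def by simp
    qed
    have dg3: "deg n (bmul g f) \<le> B - (r + 1)"
    proof (rule deg_le)
      fix S assume S: "S \<subseteq> {..<n}" "B - (r + 1) < card S"
      define s where "s = card S"
      have s: "M + r + 2 \<le> s" "s \<le> n" using S B2 cardS[OF S(1)] unfolding s_def by auto
      let ?q = "\<lambda>k. p k \<and> f {..<k}"
      have "even (W ?q s)"
      proof (cases "s < 2*M")
        case True
        define s' where "s' = s - M"
        have ss: "s = M + s'" "s' < M" "r + 1 < s'" using s True unfolding s'_def by auto
        have "W (\<lambda>k. ?q k \<noteq> ?q (k + M)) s' = W p s'"
        proof (rule W_cong)
          fix k assume k: "k \<le> s'"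
          show "(?q k \<noteq> ?q (k + M)) = p k"
          proof (cases "p k")
            case True
            then have "r < k" using psmall by (meson not_le)
            then have "f {..<k} \<noteq> f {..<k+M}" using nA k ss by auto
            then show ?thesis using True pM[of k] by auto
          next
            case False
            then show ?thesis using pM[of k] by auto
          qed
        qed
        moreover have "even (W p s')" unfolding p_def by (rule W_sigma) (use ss in simp)
        ultimately show ?thesis using shM[OF ss(2), of ?q] ss(1) by simp
      next
        case False
        define s' where "s' = s - 2*M"
        have ss: "s = 2*M + s'" "s' \<le> r" "s' < 2*M" using s False n_eq r_lt unfolding s'_def by auto
        have "W (\<lambda>k. ?q k \<noteq> ?q (k + 2*M)) s' = 0"
          by (rule W_zero) (use ss psmall p2M in auto)
        then show ?thesis using sh2M[OF ss(3), of ?q] ss(1) by simp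
      qed
      then show "even (card {T. T \<subseteq> S \<and> bmul g f T})" using cgf[OF S(1)] unfolding s_def by simp
    qed
    show ?thesis by (rule FAI_le[OF gBF dg1 dg2 dg3]) (use B1 B2 r_lt in auto)
  qed
  then show ?thesis unfolding B_def .
qed


end
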